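(* Let $(X,d)$ be a metric space, $q\geq 1$ a constant, and $T\subseteq X$ with $|T|=k\ge 2$. Then \[ \frac{k}{2}\,\mathrm{st}^q(T)\le \mathrm{cl}^q(T)\le 2^{q-1}k\,\mathrm{st}^q(T),\] and, if $k$ is even, \[ \frac{2(k-1)}{k}\,\mathrm{bp}^q(T)\le \mathrm{cl}^q(T)\le (2^q+1)\,\mathrm{bp}^q(T).\]
   Context: $d^q(u,v)=d(u,v)^q$. $\mathrm{cl}^q(T)=\sum_{\{u,v\}\subseteq T} d^q(u,v)$; $\mathrm{st}^q(T)=\min_{z\in T}\sum_{u\in T\setminus\{z\}} d^q(z,u)$; $\mathrm{bp}^q(T)=\min_{L\subseteq T,|L|=\lfloor |T|/2\rfloor}\sum_{\ell\in L,r\in T\setminus L} d^q(\ell,r)$. *)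

theory Defs
  imports "HOL-Analysis.Analysis"
begin

definition dq :: "real \<Rightarrow> 'a::metric_space \<Rightarrow> 'a \<Rightarrow> real" where
  "dq q u v = dist u v powr q"

text \<open>Clique cost: sum over unordered pairs {u,v} of distinct points of T
  (each unordered pair counted once: half the sum over ordered pairs).\<close>
definition clq :: "real \<Rightarrow> 'a::metric_space set \<Rightarrow> real" where
  "clq q T = (\<Sum>u\<in>T. \<Sum>v\<in>T - {u}. dq q u v) / 2"

definition stq :: "real \<Rightarrow> 'a::metric_space set \<Rightarrow> real" where
  "stq q T = (MIN z\<in>T. \<Sum>u\<in>T - {z}. dq q z u)"

definition bpq :: "real \<Rightarrow> 'a::metric_space set \<Rightarrow> real" where
  "bpq q T = (MIN L\<in>{L. L \<subseteq> T \<and> card L = card T div 2}.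
                 \<Sum>l\<in>L. \<Sum>r\<in>T - L. dq q l r)"

end

theory Submission
  imports Defs
begin

lemma dq_nonneg: "dq q u v \<ge> 0" by (simp add: dq_def)
lemma dq_sym: "dq q u v = dq q v u" by (simp add: dq_def dist_commute)
lemma dq_self: "dq q u u = 0" by (simp add: dq_def)

lemma powr_sum_le:
  fixes a b q :: real
  assumes q: "q \<ge> 1" and a: "a \<ge> 0" and b: "b \<ge> 0"
  shows "(a + b) powr q \<le> 2 powr (q - 1) * (a powr q + b powr q)"
proof -
  have c1: "2 powr (q - 1) \<ge> 1" using q by (intro ge_one_powr_ge_zero) auto
  show ?thesis
  proof (cases "a = 0 \<or> b = 0")
    case True
    then show ?thesis
    proof
      assume "a = 0"
      then show ?thesis using c1 mult_right_mono[OF c1, of "b powr q"] by simp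
    next
      assume "b = 0"
      then show ?thesis using c1 mult_right_mono[OF c1, of "a powr q"] by simp
    qed
  next
    case False
    then have ap: "a > 0" and bp: "b > 0" using a b by auto
    have "((1 - 1/2) *\<^sub>R a + (1/2) *\<^sub>R b) powr q \<le> (1 - 1/2) * a powr q + (1/2) * b powr q"
      using convex_onD[OF powr_convex[OF q], of "1/2" a b] ap bp by simp
    then have h: "((a + b)/2) powr q \<le> (a powr q + b powr q) / 2" by (simp add: field_simps)
    have "(a + b) powr q = (2 * ((a + b)/2)) powr q" by (rule arg_cong[where f="\<lambda>x. x powr q"]) simp
    also have "\<dots> = 2 powr q * ((a + b)/2) powr q"
      by (rule powr_mult)
    also have "\<dots> \<le> 2 powr q * ((a powr q + b powr q) / 2)"
      by (rule mult_left_mono[OF h]) simp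
    also have "\<dots> = 2 powr (q - 1) * (a powr q + b powr q)"
      by (simp add: powr_diff)
    finally show ?thesis .
  qed
qed

lemma dq_tri:
  assumes "q \<ge> 1"
  shows "dq q u v \<le> 2 powr (q - 1) * (dq q u z + dq q z v)"
proof -
  have "dist u v powr q \<le> (dist u z + dist z v) powr q"
    using assms by (intro powr_mono2) (auto intro: dist_triangle)
  also have "\<dots> \<le> 2 powr (q - 1) * (dist u z powr q + dist z v powr q)"
    using assms by (intro powr_sum_le) auto
  finally show ?thesis by (simp add: dq_def)
qed

lemma binom_id:
  "((2*j+2) choose (j+1)) * (j+1) * (j+1) = ((2*j) choose j) * (2*j+2) * (2*j+1)"
proof -
  have e1: "Suc (2*j+1) * ((2*j+1) choose j) = (Suc (2*j+1) choose Suc j) * Suc j"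
    by (rule Suc_times_binomial_eq)
  have e2: "((2*j+1) - j) * ((2*j+1) choose j) = (2*j+1) * ((2*j+1 - 1) choose j)"
    by (rule binomial_absorb_comp)
  have e2': "(j+1) * ((2*j+1) choose j) = (2*j+1) * ((2*j) choose j)"
    using e2 by (simp add: Suc_diff_le)
  have "((2*j+2) choose (j+1)) * (j+1) * (j+1) = (2*j+2) * ((2*j+1) choose j) * (j+1)"
    using e1 by simp
  also have "\<dots> = (2*j+2) * ((j+1) * ((2*j+1) choose j))" by simp
  also have "\<dots> = (2*j+2) * ((2*j+1) * ((2*j) choose j))" by (simp only: e2')
  also have "\<dots> = ((2*j) choose j) * (2*j+2) * (2*j+1)" by (simp only: ac_simps)
  finally show ?thesis .
qed


lemma sum_nodiag: "finite T \<Longrightarrow> (\<Sum>v\<in>T - {u}. dq q u v) = (\<Sum>v\<in>T. dq q u v)"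
  by (simp add: sum_diff1 dq_self)

lemma clq_eq: "finite T \<Longrightarrow> clq q T = (\<Sum>u\<in>T. \<Sum>v\<in>T. dq q u v) / 2"
  unfolding clq_def by (simp add: sum_nodiag)

lemma stq_eq: "finite T \<Longrightarrow> stq q T = (MIN z\<in>T. \<Sum>u\<in>T. dq q z u)"
  unfolding stq_def by (simp add: sum_nodiag)

lemma inner_bound:
  assumes q: "q \<ge> 1" and fP: "finite P" and fQ: "finite Q" and cPQ: "card P = card Q"
    and n0: "card Q > 0"
  shows "(\<Sum>u\<in>P. \<Sum>v\<in>P. dq q u v) \<le> 2 powr q * (\<Sum>u\<in>P. \<Sum>r\<in>Q. dq q u r)"
proof -
  define n where "n = real (card Q)"
  define c where "c = 2 powr (q - 1)"
  define g where "g u = (\<Sum>r\<in>Q. dq q u r)" for u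
  have c0: "c \<ge> 0" unfolding c_def by simp
  have pt: "n * dq q u v \<le> c * (g u + g v)" for u v
  proof -
    have "n * dq q u v = (\<Sum>r\<in>Q. dq q u v)" by (simp add: n_def)
    also have "\<dots> \<le> (\<Sum>r\<in>Q. c * (dq q u r + dq q v r))"
      by (intro sum_mono) (metis dq_tri[OF q] dq_sym c_def)
    also have "\<dots> = c * (g u + g v)"
      by (simp add: g_def sum.distrib distrib_left sum_distrib_left)
    finally show ?thesis .
  qed
  have "n * (\<Sum>u\<in>P. \<Sum>v\<in>P. dq q u v) = (\<Sum>u\<in>P. \<Sum>v\<in>P. n * dq q u v)"
    by (simp add: sum_distrib_left)
  also have "\<dots> \<le> (\<Sum>u\<in>P. \<Sum>v\<in>P. c * (g u + g v))"
    by (intro sum_mono pt)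
  also have "\<dots> = c * (\<Sum>u\<in>P. \<Sum>v\<in>P. (g u + g v))"
    by (simp add: sum_distrib_left)
  also have "\<dots> = c * (\<Sum>u\<in>P. (n * g u + sum g P))"
    using cPQ by (simp add: sum.distrib n_def)
  also have "\<dots> = c * (n * sum g P + n * sum g P)"
    using cPQ by (simp add: sum.distrib n_def sum_distrib_left)
  also have "\<dots> = n * (2 powr q * sum g P)"
    by (simp add: c_def powr_diff algebra_simps)
  finally have "n * (\<Sum>u\<in>P. \<Sum>v\<in>P. dq q u v) \<le> n * (2 powr q * sum g P)" .
  moreover have "n > 0" using n0 by (simp add: n_def)
  ultimately show ?thesis by (simp add: g_def)
qed

lemma count_sub:
  assumes fT: "finite T" and l: "l \<in> T" and r: "r \<in> T" and lr: "l \<noteq> r" and m: "m \<ge> 1"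
  shows "card {L. L \<subseteq> T \<and> card L = m \<and> l \<in> L \<and> r \<notin> L} = (card T - 2) choose (m - 1)"
proof -
  have "bij_betw (\<lambda>L. L - {l}) {L. L \<subseteq> T \<and> card L = m \<and> l \<in> L \<and> r \<notin> L}
          {B. B \<subseteq> T - {l, r} \<and> card B = m - 1}"
  proof (rule bij_betw_byWitness[where f'="insert l"])
    show "\<forall>a\<in>{L. L \<subseteq> T \<and> card L = m \<and> l \<in> L \<and> r \<notin> L}. insert l (a - {l}) = a" by auto
    show "\<forall>a'\<in>{B. B \<subseteq> T - {l, r} \<and> card B = m - 1}. insert l a' - {l} = a'" by auto
    show "(\<lambda>L. L - {l}) ` {L. L \<subseteq> T \<and> card L = m \<and> l \<in> L \<and> r \<notin> L}
          \<subseteq> {B. B \<subseteq> T - {l, r} \<and> card B = m - 1}"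
      using fT by (auto dest: finite_subset)
    show "insert l ` {B. B \<subseteq> T - {l, r} \<and> card B = m - 1}
          \<subseteq> {L. L \<subseteq> T \<and> card L = m \<and> l \<in> L \<and> r \<notin> L}"
    proof
      fix L assume "L \<in> insert l ` {B. B \<subseteq> T - {l, r} \<and> card B = m - 1}"
      then obtain B where B: "B \<subseteq> T - {l, r}" "card B = m - 1" "L = insert l B" by auto
      have "finite B" using B(1) fT finite_subset by blast
      moreover have "l \<notin> B" using B(1) by auto
      ultimately have "card L = m" using B m by simp
      then show "L \<in> {L. L \<subseteq> T \<and> card L = m \<and> l \<in> L \<and> r \<notin> L}" using B l lr by auto
    qed
  qed
  then have "card {L. L \<subseteq> T \<and> card L = m \<and> l \<in> L \<and> r \<notin> L}
      = card {B. B \<subseteq> T - {l, r} \<and> card B = m - 1}" by (rule bij_betw_same_card)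
  also have "\<dots> = card (T - {l, r}) choose (m - 1)" using fT by (intro n_subsets) auto
  also have "card (T - {l, r}) = card T - 2" using fT l r lr by (simp add: card_Diff_subset)
  finally show ?thesis .
qed

lemma cut_swap:
  assumes fT: "finite T" and fF: "finite F" and FT: "\<forall>L\<in>F. L \<subseteq> T"
  shows "(\<Sum>L\<in>F. \<Sum>l\<in>L. \<Sum>r\<in>T - L. dq q l r)
       = (\<Sum>l\<in>T. \<Sum>r\<in>T. dq q l r * card {L\<in>F. l \<in> L \<and> r \<notin> L})"
proof -
  have "(\<Sum>l\<in>L. \<Sum>r\<in>T - L. dq q l r)
      = (\<Sum>l\<in>T. \<Sum>r\<in>T. if l \<in> L \<and> r \<notin> L then dq q l r else 0)" if "L \<in> F" for L
  proof -
    have L: "L = {l\<in>T. l \<in> L}" and R: "T - L = {r\<in>T. r \<notin> L}" using FT that by auto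
    have "(\<Sum>l\<in>L. \<Sum>r\<in>T - L. dq q l r) = (\<Sum>l\<in>{l\<in>T. l \<in> L}. \<Sum>r\<in>{r\<in>T. r \<notin> L}. dq q l r)"
      using L R by simp
    also have "\<dots> = (\<Sum>l\<in>T. if l \<in> L then \<Sum>r\<in>T. if r \<notin> L then dq q l r else 0 else 0)"
      using fT by (simp add: sum.inter_filter)
    also have "\<dots> = (\<Sum>l\<in>T. \<Sum>r\<in>T. if l \<in> L \<and> r \<notin> L then dq q l r else 0)"
      by (intro sum.cong) auto
    finally show ?thesis .
  qed
  then have "(\<Sum>L\<in>F. \<Sum>l\<in>L. \<Sum>r\<in>T - L. dq q l r)
      = (\<Sum>L\<in>F. \<Sum>l\<in>T. \<Sum>r\<in>T. if l \<in> L \<and> r \<notin> L then dq q l r else 0)"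
    by (rule sum.cong[OF refl])
  also have "\<dots> = (\<Sum>l\<in>T. \<Sum>r\<in>T. \<Sum>L\<in>F. if l \<in> L \<and> r \<notin> L then dq q l r else 0)"
    by (subst sum.swap) (subst (2) sum.swap, rule refl)
  also have "\<dots> = (\<Sum>l\<in>T. \<Sum>r\<in>T. dq q l r * card {L\<in>F. l \<in> L \<and> r \<notin> L})"
    using fF by (intro sum.cong refl) (simp add: sum.inter_filter[symmetric])
  finally show ?thesis .
qed


lemma st_part:
  fixes T :: "'a::metric_space set"
  assumes q: "q \<ge> 1" and fT: "finite T" and kT: "card T = k" and k2: "k \<ge> 2"
  shows "real k / 2 * stq q T \<le> clq q T \<and> clq q T \<le> 2 powr (q - 1) * real k * stq q T"
proof -
  define S where "S z = (\<Sum>u\<in>T. dq q z u)" for z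
  define A where "A = (\<Sum>u\<in>T. \<Sum>v\<in>T. dq q u v)"
  define c where "c = 2 powr (q - 1)"
  have cl: "clq q T = A / 2" using fT by (simp add: clq_eq A_def)
  have st: "stq q T = Min (S ` T)" using fT by (simp add: stq_eq S_def)
  have ne: "T \<noteq> {}" using kT k2 by auto
  have AS: "A = sum S T" by (simp add: A_def S_def)
  have "(\<Sum>u\<in>T. stq q T) \<le> sum S T"
    by (intro sum_mono) (simp add: st fT)
  then have low: "real k * stq q T \<le> A" using kT AS by simp
  have "Min (S ` T) \<in> S ` T" using fT ne by (intro Min_in) auto
  then obtain z where z: "z \<in> T" "stq q T = S z" using st by auto
  have "A \<le> (\<Sum>u\<in>T. \<Sum>v\<in>T. c * (dq q u z + dq q z v))"
    unfolding A_def c_def by (intro sum_mono dq_tri q)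
  also have "\<dots> = c * (\<Sum>u\<in>T. \<Sum>v\<in>T. (dq q z u + dq q z v))"
    by (simp add: sum_distrib_left dq_sym[of q _ z])
  also have "\<dots> = c * (\<Sum>u\<in>T. (real k * dq q z u + S z))"
    using kT by (simp add: sum.distrib S_def)
  also have "\<dots> = c * (2 * real k * S z)"
    using kT by (simp add: sum.distrib S_def sum_distrib_left[symmetric] algebra_simps)
  finally have up: "A \<le> c * (2 * real k * S z)" .
  show ?thesis using low up z cl by (simp add: c_def)
qed

lemma bp_part:
  fixes T :: "'a::metric_space set"
  assumes q: "q \<ge> 1" and fT: "finite T" and kT: "card T = k" and k2: "k \<ge> 2" and ev: "even k"
  shows "2 * (real k - 1) / real k * bpq q T \<le> clq q T \<and> clq q T \<le> (2 powr q + 1) * bpq q T"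
proof -
  define m where "m = k div 2"
  define F where "F = {L. L \<subseteq> T \<and> card L = m}"
  define cut where "cut L = (\<Sum>l\<in>L. \<Sum>r\<in>T - L. dq q l r)" for L
  define A where "A = (\<Sum>u\<in>T. \<Sum>v\<in>T. dq q u v)"
  obtain i where i: "k = 2 * i" using ev by (auto elim: evenE)
  define j where "j = i - 1"
  have j: "k = 2 * j + 2" using i k2 by (simp add: j_def)
  have mj: "m = j + 1" using j by (simp add: m_def)
  have cl: "clq q T = A / 2" using fT by (simp add: clq_eq A_def)
  have bp: "bpq q T = Min (cut ` F)" by (simp add: bpq_def F_def cut_def m_def kT)
  have fF: "finite F" using finite_subset[of F "Pow T"] fT by (auto simp: F_def)
  have cF: "card F = k choose m" unfolding F_def using fT kT by (simp add: n_subsets)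
  have mk: "m \<le> k" by (simp add: m_def)
  have neF: "F \<noteq> {}"
  proof -
    obtain L where "L \<subseteq> T" "card L = m" using obtain_subset_with_card_n[of m T] mk kT by metis
    then show ?thesis by (auto simp: F_def)
  qed
  have "Min (cut ` F) \<in> cut ` F" using fF neF by (intro Min_in) auto
  then obtain L0 where L0: "L0 \<in> F" "bpq q T = cut L0" using bp by auto
  define C where "C = (k - 2) choose (m - 1)"
  have sumcut: "(\<Sum>L\<in>F. cut L) = real C * A"
  proof -
    have "(\<Sum>L\<in>F. cut L) = (\<Sum>l\<in>T. \<Sum>r\<in>T. dq q l r * card {L\<in>F. l \<in> L \<and> r \<notin> L})"
      unfolding cut_def using fT fF by (intro cut_swap) (auto simp: F_def)
    also have "\<dots> = (\<Sum>l\<in>T. \<Sum>r\<in>T. dq q l r * real C)"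
    proof (intro sum.cong refl)
      fix l r assume l: "l \<in> T" and r: "r \<in> T"
      show "dq q l r * card {L\<in>F. l \<in> L \<and> r \<notin> L} = dq q l r * real C"
      proof (cases "l = r")
        case True then show ?thesis by (simp add: dq_self)
      next
        case False
        have "{L\<in>F. l \<in> L \<and> r \<notin> L} = {L. L \<subseteq> T \<and> card L = m \<and> l \<in> L \<and> r \<notin> L}"
          by (auto simp: F_def)
        then have "card {L\<in>F. l \<in> L \<and> r \<notin> L} = C"
          using count_sub[OF fT l r False, of m] mj kT by (simp add: C_def)
        then show ?thesis by simp
      qed
    qed
    also have "\<dots> = real C * A" by (simp add: A_def sum_distrib_left mult.commute)
    finally show ?thesis .
  qed
  have "(\<Sum>L\<in>F. bpq q T) \<le> (\<Sum>L\<in>F. cut L)"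
    by (intro sum_mono) (simp add: bp fF)
  then have lowc: "real (k choose m) * bpq q T \<le> real C * A" using sumcut cF by simp
  have bid: "(k choose m) * m * m = C * k * (k - 1)"
    using binom_id[of j] unfolding j mj C_def by (simp del: binomial_Suc_Suc)
  have bid2: "real (k choose m) * real k = 4 * real C * (real k - 1)"
  proof -
    have "real (k choose m) * real m * real m = real C * real k * (real k - 1)"
    proof -
      have "real ((k choose m) * m * m) = real (C * k * (k - 1))" using bid by simp
      then show ?thesis using k2 by (simp add: of_nat_diff)
    qed
    moreover have "real k = 2 * real m" using j mj by simp
    ultimately have "real k * (real (k choose m) * real k) = real k * (4 * real C * (real k - 1))"
      by (simp add: algebra_simps)
    then show ?thesis using k2 by simp
  qed
  have Cpos: "real C > 0" unfolding C_def using mj j by (simp del: binomial_Suc_Suc)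
  have "real C * (4 * (real k - 1) * bpq q T) = (4 * real C * (real k - 1)) * bpq q T"
    by (simp add: algebra_simps)
  also have "\<dots> = (real (k choose m) * real k) * bpq q T" by (simp only: bid2)
  also have "\<dots> = real k * (real (k choose m) * bpq q T)" by (simp add: algebra_simps)
  also have "\<dots> \<le> real k * (real C * A)" using lowc by (intro mult_left_mono) auto
  finally have h: "real C * (4 * (real k - 1) * bpq q T) \<le> real k * (real C * A)" .
  then have "real C * (4 * (real k - 1) * bpq q T) \<le> real C * (real k * A)"
    by (simp add: mult.left_commute)
  then have h4: "4 * (real k - 1) * bpq q T \<le> real k * A"
    using Cpos mult_le_cancel_left_pos by blast
  have kp: "real k > 0" using k2 by simp
  have "2 * (real k - 1) / real k * bpq q T = (4 * (real k - 1) * bpq q T) / (2 * real k)"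
    using kp by (simp add: field_simps)
  also have "\<dots> \<le> (real k * A) / (2 * real k)"
    by (rule divide_right_mono[OF h4]) (use kp in simp)
  also have "\<dots> = clq q T" using cl kp by simp
  finally have low: "2 * (real k - 1) / real k * bpq q T \<le> clq q T" .
  define R where "R = T - L0"
  have L0T: "L0 \<subseteq> T" and cL0: "card L0 = m" using L0 by (auto simp: F_def)
  have fL0: "finite L0" using fT L0T finite_subset by blast
  have fR: "finite R" using fT by (simp add: R_def)
  have cR: "card R = m" using fT L0T cL0 kT j mj by (simp add: R_def card_Diff_subset fL0)
  define X where "X = (\<Sum>u\<in>L0. \<Sum>v\<in>R. dq q u v)"
  have X: "X = bpq q T" using L0 by (simp add: X_def cut_def R_def)
  have X2: "(\<Sum>u\<in>R. \<Sum>v\<in>L0. dq q u v) = X"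
    unfolding X_def by (subst sum.swap) (simp add: dq_sym)
  have split: "(\<Sum>u\<in>T. f u) = (\<Sum>u\<in>R. f u) + (\<Sum>u\<in>L0. f u)" for f :: "'a \<Rightarrow> real"
    unfolding R_def using L0T fT by (rule sum.subset_diff)
  have "A = (\<Sum>u\<in>R. \<Sum>v\<in>R. dq q u v) + (\<Sum>u\<in>R. \<Sum>v\<in>L0. dq q u v)
          + ((\<Sum>u\<in>L0. \<Sum>v\<in>R. dq q u v) + (\<Sum>u\<in>L0. \<Sum>v\<in>L0. dq q u v))"
    unfolding A_def by (simp only: split sum.distrib)
  moreover have "(\<Sum>u\<in>L0. \<Sum>v\<in>L0. dq q u v) \<le> 2 powr q * X"
    unfolding X_def using q fL0 fR cL0 cR mj by (intro inner_bound) auto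
  moreover have "(\<Sum>u\<in>R. \<Sum>v\<in>R. dq q u v) \<le> 2 powr q * X"
    using inner_bound[OF q fR fL0] cL0 cR mj X2 by auto
  moreover have "(\<Sum>u\<in>L0. \<Sum>v\<in>R. dq q u v) = X" by (simp add: X_def)
  ultimately have "A \<le> 2 * X + 2 powr q * X + 2 powr q * X" using X2 by linarith
  then have "A \<le> 2 * (2 powr q + 1) * X" by (simp add: algebra_simps)
  then have up: "clq q T \<le> (2 powr q + 1) * bpq q T" using cl X by (simp add: algebra_simps)
  show ?thesis using low up by simp
qed

theorem lemma4:
  fixes T :: "'a::metric_space set" and q :: real and k :: nat
  assumes "q \<ge> 1" and "finite T" and "card T = k" and "k \<ge> 2"
  shows "real k / 2 * stq q T \<le> clq q T
         \<and> clq q T \<le> 2 powr (q - 1) * real k * stq q T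
         \<and> (even k \<longrightarrow>
              2 * (real k - 1) / real k * bpq q T \<le> clq q T
              \<and> clq q T \<le> (2 powr q + 1) * bpq q T)"
  using st_part[OF assms] bp_part[OF assms] by blast

end
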